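(* Consider the model in the context with $\gamma<0$, and let $s,t\in\mathcal{T}$ with $t\geq s+2$ and $t+1\le T$. Under Assumption A, for both $\tau=s$ and $\tau=t$: \[ P(y_{\tau}=1\mid w^{T},y_{s-1}=y_{t-1},y_{s+1}=y_{t+1}=1,\alpha)=F_{\epsilon|\alpha}(w_{\tau}+\gamma y_{\tau-1}+\alpha)\,P(E_{\tau+1,1}\mid w^{T},y_{s-1}=y_{t-1},y_{s+1}=y_{t+1}=1,\alpha), \] and \[ P(y_{\tau}=1\mid w^{T},y_{s-1}=y_{t-1},y_{s+1}=y_{t+1}=0,\alpha)=P(E_{\tau+1,2}\mid w^{T},y_{s-1}=y_{t-1},y_{s+1}=y_{t+1}=0,\alpha)+F_{\epsilon|\alpha}(w_{\tau}+\gamma y_{\tau-1}+\alpha)\,P(E_{\tau+1,3}\mid w^{T},y_{s-1}=y_{t-1},y_{s+1}=y_{t+1}=0,\alpha), \] where on the right-hand sides $y_{\tau-1}$ denotes its (common) conditioned value.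
   Context: Model: $y_0\in\{0,1\}$ observed and, for $t\in\mathcal{T}=\{1,\dots,T\}$, $y_{t}=1[x_{t}^{\prime}\beta+\gamma y_{t-1}+\alpha-\epsilon_{t}>0]$, $x_t\in\mathbb{R}^K$ observed, $\alpha$ an unobserved individual effect, $\epsilon_t$ unobserved errors. $w_t=x_t'\beta$, $w^T=(w_1,\dots,w_T)$. For each $t$, define the partition $E_{t,1}=\{\epsilon_t<w_t+\gamma+\alpha\}$, $E_{t,2}=\{w_t+\gamma+\alpha\le\epsilon_t<w_t+\alpha\}$, $E_{t,3}=\{\epsilon_t\ge w_t+\alpha\}$. Assumption A: for all $\alpha$ and $s,t\in\mathcal{T}$: (a)(i) $\epsilon^T\perp(x^T,y_0)\mid\alpha$, (ii) $\epsilon_s\perp\epsilon_t\mid\alpha$ ($s\ne t$), (iii) $\epsilon_s\overset{d}{=}\epsilon_t\mid\alpha$, with common CDF $F_{\epsilon|\alpha}$; (b) $F_{\epsilon|\alpha}$ absolutely continuous with support $\mathbb{R}$; (c) $x_{ts,1}$ (first component of $x_t-x_s$) has a.e. positive density on $\mathbb{R}$ given the remaining components and $\alpha$, and $\beta_1\ne0$; (d) the support of $x_t-x_s$ given $\alpha$ is not in a proper linear subspace of $\mathbb{R}^K$; (e) $\|\beta\|_2=1$, $\gamma$ in the interior of a compact $\mathcal{R}\subset\mathbb{R}$. *)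

theory Defs
  imports "HOL-Probability.Probability"
begin

text \<open>Outcome path of the dynamic binary choice model
  y_t = 1[w_t + gamma * y_(t-1) + alpha - eps_t > 0], started at the initial value y0,
  for a given index sequence w (w_t = x_t' beta), state dependence gamma, individual
  effect alpha and error realisations e.\<close>
fun yseq :: "(nat \<Rightarrow> real) \<Rightarrow> real \<Rightarrow> real \<Rightarrow> real \<Rightarrow> (nat \<Rightarrow> real) \<Rightarrow> nat \<Rightarrow> real" where
  "yseq w \<gamma> \<alpha> y0 e 0 = y0"
| "yseq w \<gamma> \<alpha> y0 e (Suc n) =
     (if w (Suc n) + \<gamma> * yseq w \<gamma> \<alpha> y0 e n + \<alpha> - e (Suc n) > 0 then 1 else 0)"

end

theory Submission imports Defs begin

fun yfrom :: "(nat \<Rightarrow> real) \<Rightarrow> real \<Rightarrow> real \<Rightarrow> real \<Rightarrow> (nat \<Rightarrow> real) \<Rightarrow> nat \<Rightarrow> nat \<Rightarrow> real" where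
  "yfrom w \<gamma> \<alpha> v e m 0 = v"
| "yfrom w \<gamma> \<alpha> v e m (Suc k) =
     (if w (m + Suc k) + \<gamma> * yfrom w \<gamma> \<alpha> v e m k + \<alpha> - e (m + Suc k) > 0 then 1 else 0)"

lemma yseq_yfrom: "yseq w \<gamma> \<alpha> y0 e (m + k) = yfrom w \<gamma> \<alpha> (yseq w \<gamma> \<alpha> y0 e m) e m k"
  by (induction k) auto

lemma yseq_meas:
  assumes "y0 \<in> borel_measurable N" "\<And>k. 1 \<le> k \<Longrightarrow> k \<le> n \<Longrightarrow> eps k \<in> borel_measurable N"
  shows "(\<lambda>\<omega>. yseq w \<gamma> \<alpha> (y0 \<omega>) (\<lambda>i. eps i \<omega>) n) \<in> borel_measurable N"
  using assms(2)
proof (induction n)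
  case 0
  then show ?case using assms(1) by simp
next
  case (Suc n)
  have "(\<lambda>\<omega>. yseq w \<gamma> \<alpha> (y0 \<omega>) (\<lambda>i. eps i \<omega>) n) \<in> borel_measurable N" using Suc by auto
  moreover have "eps (Suc n) \<in> borel_measurable N" using Suc by auto
  ultimately show ?case by simp measurable
qed

lemma yfrom_meas:
  assumes "\<And>j. 1 \<le> j \<Longrightarrow> j \<le> k \<Longrightarrow> eps (m + j) \<in> borel_measurable N"
  shows "(\<lambda>\<omega>. yfrom w \<gamma> \<alpha> v (\<lambda>i. eps i \<omega>) m k) \<in> borel_measurable N"
  using assms
proof (induction k)
  case 0
  then show ?case by simp
next
  case (Suc k)
  have "(\<lambda>\<omega>. yfrom w \<gamma> \<alpha> v (\<lambda>i. eps i \<omega>) m k) \<in> borel_measurable N" using Suc by auto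
  moreover have "eps (Suc (m + k)) \<in> borel_measurable N" using Suc.prems[of "Suc k"] by simp
  ultimately show ?case by simp measurable
qed

context prob_space begin

lemma grp_indep:
  assumes ind: "indep_vars (\<lambda>_. borel) X I" and K: "\<And>j. j \<in> L \<Longrightarrow> K j \<subseteq> I"
    and disj: "disjoint_family_on K L"
  shows "indep_sets (\<lambda>j. sigma_sets (space M) (\<Union>i\<in>K j. {X i -` A \<inter> space M | A. A \<in> sets borel})) L"
proof (rule indep_sets_collect_sigma)
  show "indep_sets (\<lambda>i. {X i -` A \<inter> space M |A. A \<in> sets borel}) (\<Union>j\<in>L. K j)"
  proof (rule indep_sets_mono_index)
    show "indep_sets (\<lambda>i. {X i -` A \<inter> space M |A. A \<in> sets borel}) I"
      using ind unfolding indep_vars_def2 by auto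
    show "(\<Union>l\<in>L. K l) \<subseteq> I"
      using K by auto
  qed
next
  fix l i assume "l \<in> L" "i \<in> K l"
  show "Int_stable {X i -` A \<inter> space M |A. A \<in> sets borel}"
    apply (auto simp: Int_stable_def)
    apply (rule_tac x="A \<inter> Aa" in exI)
    apply auto
    done
qed fact

lemma grp_meas:
  assumes "i \<in> K"
  shows "X i \<in> borel_measurable (sigma (space M) (\<Union>i\<in>K. {X i -` A \<inter> space M | A. A \<in> sets (borel::real measure)}))"
proof (rule measurableI)
  have sub: "(\<Union>i\<in>K. {X i -` A \<inter> space M | A. A \<in> sets (borel::real measure)}) \<subseteq> Pow (space M)" by auto
  fix A :: "real set" assume "A \<in> sets borel"
  then show "X i -` A \<inter> space (sigma (space M) (\<Union>i\<in>K. {X i -` A \<inter> space M | A. A \<in> sets (borel::real measure)}))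
     \<in> sets (sigma (space M) (\<Union>i\<in>K. {X i -` A \<inter> space M | A. A \<in> sets (borel::real measure)}))"
    using assms sub by (auto simp: sets_measure_of space_measure_of_conv intro!: sigma_sets.Basic)
qed auto

lemma grp_pred:
  assumes "Measurable.pred (sigma (space M) (\<Union>i\<in>K. {X i -` A \<inter> space M | A. A \<in> sets (borel::real measure)})) P"
  shows "{\<omega> \<in> space M. P \<omega>} \<in> sigma_sets (space M) (\<Union>i\<in>K. {X i -` A \<inter> space M | A. A \<in> sets (borel::real measure)})"
proof -
  have sub: "(\<Union>i\<in>K. {X i -` A \<inter> space M | A. A \<in> sets (borel::real measure)}) \<subseteq> Pow (space M)" by auto
  have "{\<omega> \<in> space (sigma (space M) (\<Union>i\<in>K. {X i -` A \<inter> space M | A. A \<in> sets (borel::real measure)})). P \<omega>} \<in> sets (sigma (space M) (\<Union>i\<in>K. {X i -` A \<inter> space M | A. A \<in> sets (borel::real measure)}))"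
    using assms by (rule predE)
  then show ?thesis using sub by (simp add: sets_measure_of space_measure_of_conv)
qed

lemma core:
  fixes X :: "nat \<Rightarrow> 'a \<Rightarrow> real"
  assumes ind: "indep_vars (\<lambda>_. borel) X {0..T}" and tau: "1 \<le> \<tau>" "\<tau> + 1 \<le> T"
    and A: "A \<in> sigma_sets (space M) (\<Union>i\<in>{0..\<tau>-1}. {X i -` S \<inter> space M | S. S \<in> sets (borel::real measure)})"
    and B: "B \<in> sigma_sets (space M) (\<Union>i\<in>{\<tau>+2..T}. {X i -` S \<inter> space M | S. S \<in> sets (borel::real measure)})"
    and S1: "S1 \<in> sets borel" and S2: "S2 \<in> sets borel"
  shows "prob (A \<inter> (X \<tau> -` S1 \<inter> space M) \<inter> (X (\<tau>+1) -` S2 \<inter> space M) \<inter> B)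
    = prob A * prob (X \<tau> -` S1 \<inter> space M) * prob (X (\<tau>+1) -` S2 \<inter> space M) * prob B"
proof -
  define K where "K = (\<lambda>j::nat. if j = 0 then {0..\<tau>-1} else if j = 1 then {\<tau>} else if j = 2 then {\<tau>+1} else {\<tau>+2..T})"
  define Ev where "Ev = (\<lambda>j::nat. if j = 0 then A else if j = 1 then X \<tau> -` S1 \<inter> space M
     else if j = 2 then X (\<tau>+1) -` S2 \<inter> space M else B)"
  have ii: "indep_sets (\<lambda>j. sigma_sets (space M) (\<Union>i\<in>K j. {X i -` S \<inter> space M | S. S \<in> sets borel})) {0,1,2,3}"
  proof (rule grp_indep[OF ind])
    show "\<And>j. j \<in> {0, 1, 2, 3} \<Longrightarrow> K j \<subseteq> {0..T}" using tau by (auto simp: K_def)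
    show "disjoint_family_on K {0, 1, 2, 3}" using tau by (auto simp: K_def disjoint_family_on_def)
  qed
  have "prob (\<Inter>j\<in>{0,1,2,3}. Ev j) = (\<Prod>j\<in>{0,1,2,3}. prob (Ev j))"
  proof (rule indep_setsD[OF ii])
    show "\<forall>j\<in>{0, 1, 2, 3}. Ev j \<in> sigma_sets (space M) (\<Union>i\<in>K j. {X i -` S \<inter> space M |S. S \<in> sets borel})"
      using A B S1 S2 by (auto simp: K_def Ev_def intro!: sigma_sets.Basic)
  qed auto
  then show ?thesis by (simp add: Ev_def Int_ac mult_ac)
qed

lemma main1:
  fixes Y :: "nat \<Rightarrow> 'a \<Rightarrow> real"
  assumes ind: "indep_vars (\<lambda>_. borel) (\<lambda>i. if i = 0 then y0 else eps i) {0..T}"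
    and g: "\<gamma> < 0" and tau: "1 \<le> \<tau>" "\<tau> + 1 \<le> T"
    and Ydef: "\<And>n \<omega>. Y n \<omega> = yseq w \<gamma> \<alpha> (y0 \<omega>) (\<lambda>i. eps i \<omega>) n"
    and A: "A \<in> sigma_sets (space M) (\<Union>i\<in>{0..\<tau>-1}. {(\<lambda>i. if i = 0 then y0 else eps i) i -` S \<inter> space M | S. S \<in> sets (borel::real measure)})"
    and B: "B \<in> sigma_sets (space M) (\<Union>i\<in>{\<tau>+2..T}. {(\<lambda>i. if i = 0 then y0 else eps i) i -` S \<inter> space M | S. S \<in> sets (borel::real measure)})"
    and hA: "\<forall>\<omega>\<in>A. Y (\<tau>-1) \<omega> = d"
    and hQ: "\<forall>\<omega>\<in>space M. Q \<omega> \<longleftrightarrow> \<omega> \<in> A \<and> Y (\<tau>+1) \<omega> = 1 \<and> \<omega> \<in> B"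
    and hF: "Fc = prob {\<omega> \<in> space M. eps \<tau> \<omega> < w \<tau> + \<gamma> * d + \<alpha>}"
  shows "cond_prob M (\<lambda>\<omega>. Y \<tau> \<omega> = 1) Q = Fc * cond_prob M (\<lambda>\<omega>. eps (\<tau>+1) \<omega> < w (\<tau>+1) + \<gamma> + \<alpha>) Q"
proof -
  define c where "c = w \<tau> + \<gamma> * d + \<alpha>"
  define a1 where "a1 = w (\<tau>+1) + \<gamma> + \<alpha>"
  define a0 where "a0 = w (\<tau>+1) + \<alpha>"
  have a10: "a1 < a0" using g by (simp add: a1_def a0_def)
  let ?X = "\<lambda>i. if i = 0 then y0 else eps i"
  define E where "E = (\<lambda>S. eps \<tau> -` S \<inter> space M)"
  define E' where "E' = (\<lambda>S. eps (\<tau>+1) -` S \<inter> space M)"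
  have XE: "?X \<tau> -` S \<inter> space M = E S" for S using tau by (simp add: E_def)
  have XE': "?X (\<tau>+1) -` S \<inter> space M = E' S" for S by (simp add: E'_def)
  have cr: "prob (A \<inter> E S1 \<inter> E' S2 \<inter> B) = prob A * prob (E S1) * prob (E' S2) * prob B"
    if "S1 \<in> sets borel" "S2 \<in> sets borel" for S1 S2
    using core[OF ind tau A B that] by (simp add: XE XE' E'_def)
  have Xm: "?X i \<in> borel_measurable M" if "i \<in> {0..T}" for i using ind that unfolding indep_vars_def2 by auto
  have sub: "(\<Union>i\<in>K. {?X i -` S \<inter> space M | S. S \<in> sets (borel::real measure)}) \<subseteq> sets M"
    if "K \<subseteq> {0..T}" for K using Xm that by (auto intro!: measurable_sets)
  have k1: "{0..\<tau>-1} \<subseteq> {0..T}" "{\<tau>+2..T} \<subseteq> {0..T}" using tau by auto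
  have Aev: "A \<in> events" using sets.sigma_sets_subset[OF sub[OF k1(1)]] A by blast
  have Bev: "B \<in> events" using sets.sigma_sets_subset[OF sub[OF k1(2)]] B by blast
  have Eev: "E S \<in> events" if "S \<in> sets borel" for S
    using Xm[of \<tau>] tau that unfolding E_def by (auto intro!: measurable_sets)
  have E'ev: "E' S \<in> events" if "S \<in> sets borel" for S
    using Xm[of "\<tau>+1"] tau that unfolding E'_def by (auto intro!: measurable_sets)
  have Yt: "Y \<tau> \<omega> = (if eps \<tau> \<omega> < c then 1 else 0)" if "\<omega> \<in> A" for \<omega>
  proof -
    obtain k where k: "\<tau> = Suc k" using tau by (cases \<tau>) auto
    have "Y \<tau> \<omega> = (if w \<tau> + \<gamma> * Y (\<tau>-1) \<omega> + \<alpha> - eps \<tau> \<omega> > 0 then 1 else 0)"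
      by (simp add: Ydef k)
    then show ?thesis using hA that by (auto simp: c_def)
  qed
  have Yt1: "Y (\<tau>+1) \<omega> = (if eps (\<tau>+1) \<omega> < (if eps \<tau> \<omega> < c then a1 else a0) then 1 else 0)" if "\<omega> \<in> A" for \<omega>
  proof -
    have "Y (\<tau>+1) \<omega> = (if w (\<tau>+1) + \<gamma> * Y \<tau> \<omega> + \<alpha> - eps (\<tau>+1) \<omega> > 0 then 1 else 0)"
      by (simp add: Ydef)
    then show ?thesis using Yt[OF that] by (auto simp: a1_def a0_def)
  qed
  have Asp: "A \<subseteq> space M" using Aev sets.sets_into_space by auto
  have s1: "{\<omega> \<in> space M. Y \<tau> \<omega> = 1 \<and> Q \<omega>} = A \<inter> E {..<c} \<inter> E' {..<a1} \<inter> B"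
    using hQ Yt Yt1 Asp by (auto simp: E_def E'_def split: if_splits)
  have s2: "{\<omega> \<in> space M. Q \<omega>} = (A \<inter> E {..<c} \<inter> E' {..<a1} \<inter> B) \<union> (A \<inter> E {c..} \<inter> E' {..<a0} \<inter> B)"
    using hQ Yt Yt1 Asp by (auto simp: E_def E'_def split: if_splits)
  have s3: "{\<omega> \<in> space M. eps (\<tau>+1) \<omega> < a1 \<and> Q \<omega>} = A \<inter> E UNIV \<inter> E' {..<a1} \<inter> B"
    using hQ Yt Yt1 Asp a10 by (auto simp: E_def E'_def split: if_splits)
  have EU: "E UNIV = space M" by (auto simp: E_def)
  have dj: "(A \<inter> E {..<c} \<inter> E' {..<a1} \<inter> B) \<inter> (A \<inter> E {c..} \<inter> E' {..<a0} \<inter> B) = {}"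
    by (auto simp: E_def)
  have pQ: "prob {\<omega> \<in> space M. Q \<omega>} = prob (A \<inter> E {..<c} \<inter> E' {..<a1} \<inter> B) + prob (A \<inter> E {c..} \<inter> E' {..<a0} \<inter> B)"
    unfolding s2 by (rule finite_measure_Union) (use dj Aev Bev Eev E'ev in auto)
  have Fc: "Fc = prob (E {..<c})" using hF by (simp add: E_def c_def vimage_def Collect_conj_eq Int_commute)
  have AI: "A \<inter> space M = A" using Asp by auto
  have s3': "{\<omega> \<in> space M. eps (\<tau>+1) \<omega> < w (\<tau>+1) + \<gamma> + \<alpha> \<and> Q \<omega>} = A \<inter> E UNIV \<inter> E' {..<a1} \<inter> B"
    using s3 by (simp add: a1_def)
  have "cond_prob M (\<lambda>\<omega>. Y \<tau> \<omega> = 1) Q = prob (A \<inter> E {..<c} \<inter> E' {..<a1} \<inter> B) / prob {\<omega> \<in> space M. Q \<omega>}"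
    by (simp add: cond_prob_def s1)
  moreover have "cond_prob M (\<lambda>\<omega>. eps (\<tau>+1) \<omega> < w (\<tau>+1) + \<gamma> + \<alpha>) Q = prob (A \<inter> E UNIV \<inter> E' {..<a1} \<inter> B) / prob {\<omega> \<in> space M. Q \<omega>}"
    unfolding cond_prob_def s3' by simp
  moreover have "prob (A \<inter> E {..<c} \<inter> E' {..<a1} \<inter> B) = Fc * prob (A \<inter> E UNIV \<inter> E' {..<a1} \<inter> B)"
    using cr[of "{..<c}" "{..<a1}"] cr[of "UNIV" "{..<a1}"] by (simp add: Fc EU AI prob_space)
  ultimately show ?thesis by simp
qed

lemma main0:
  fixes Y :: "nat \<Rightarrow> 'a \<Rightarrow> real"
  assumes ind: "indep_vars (\<lambda>_. borel) (\<lambda>i. if i = 0 then y0 else eps i) {0..T}"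
    and g: "\<gamma> < 0" and tau: "1 \<le> \<tau>" "\<tau> + 1 \<le> T"
    and Ydef: "\<And>n \<omega>. Y n \<omega> = yseq w \<gamma> \<alpha> (y0 \<omega>) (\<lambda>i. eps i \<omega>) n"
    and A: "A \<in> sigma_sets (space M) (\<Union>i\<in>{0..\<tau>-1}. {(\<lambda>i. if i = 0 then y0 else eps i) i -` S \<inter> space M | S. S \<in> sets (borel::real measure)})"
    and B: "B \<in> sigma_sets (space M) (\<Union>i\<in>{\<tau>+2..T}. {(\<lambda>i. if i = 0 then y0 else eps i) i -` S \<inter> space M | S. S \<in> sets (borel::real measure)})"
    and hA: "\<forall>\<omega>\<in>A. Y (\<tau>-1) \<omega> = d"
    and hQ: "\<forall>\<omega>\<in>space M. Q \<omega> \<longleftrightarrow> \<omega> \<in> A \<and> Y (\<tau>+1) \<omega> = 0 \<and> \<omega> \<in> B"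
    and hF: "Fc = prob {\<omega> \<in> space M. eps \<tau> \<omega> < w \<tau> + \<gamma> * d + \<alpha>}"
  shows "cond_prob M (\<lambda>\<omega>. Y \<tau> \<omega> = 1) Q = cond_prob M (\<lambda>\<omega>. w (\<tau>+1) + \<gamma> + \<alpha> \<le> eps (\<tau>+1) \<omega> \<and> eps (\<tau>+1) \<omega> < w (\<tau>+1) + \<alpha>) Q
     + Fc * cond_prob M (\<lambda>\<omega>. eps (\<tau>+1) \<omega> \<ge> w (\<tau>+1) + \<alpha>) Q"
proof -
  define c where "c = w \<tau> + \<gamma> * d + \<alpha>"
  define a1 where "a1 = w (\<tau>+1) + \<gamma> + \<alpha>"
  define a0 where "a0 = w (\<tau>+1) + \<alpha>"
  have a10: "a1 < a0" using g by (simp add: a1_def a0_def)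
  let ?X = "\<lambda>i. if i = 0 then y0 else eps i"
  define E where "E = (\<lambda>S. eps \<tau> -` S \<inter> space M)"
  define E' where "E' = (\<lambda>S. eps (\<tau>+1) -` S \<inter> space M)"
  have XE: "?X \<tau> -` S \<inter> space M = E S" for S using tau by (simp add: E_def)
  have XE': "?X (\<tau>+1) -` S \<inter> space M = E' S" for S by (simp add: E'_def)
  have cr: "prob (A \<inter> E S1 \<inter> E' S2 \<inter> B) = prob A * prob (E S1) * prob (E' S2) * prob B"
    if "S1 \<in> sets borel" "S2 \<in> sets borel" for S1 S2
    using core[OF ind tau A B that] by (simp add: XE XE' E'_def)
  have Xm: "?X i \<in> borel_measurable M" if "i \<in> {0..T}" for i using ind that unfolding indep_vars_def2 by auto
  have sub: "(\<Union>i\<in>K. {?X i -` S \<inter> space M | S. S \<in> sets (borel::real measure)}) \<subseteq> sets M"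
    if "K \<subseteq> {0..T}" for K using Xm that by (auto intro!: measurable_sets)
  have k1: "{0..\<tau>-1} \<subseteq> {0..T}" "{\<tau>+2..T} \<subseteq> {0..T}" using tau by auto
  have Aev: "A \<in> events" using sets.sigma_sets_subset[OF sub[OF k1(1)]] A by blast
  have Bev: "B \<in> events" using sets.sigma_sets_subset[OF sub[OF k1(2)]] B by blast
  have Eev: "E S \<in> events" if "S \<in> sets borel" for S
    using Xm[of \<tau>] tau that unfolding E_def by (auto intro!: measurable_sets)
  have E'ev: "E' S \<in> events" if "S \<in> sets borel" for S
    using Xm[of "\<tau>+1"] tau that unfolding E'_def by (auto intro!: measurable_sets)
  have Yt: "Y \<tau> \<omega> = (if eps \<tau> \<omega> < c then 1 else 0)" if "\<omega> \<in> A" for \<omega>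
  proof -
    obtain k where k: "\<tau> = Suc k" using tau by (cases \<tau>) auto
    have "Y \<tau> \<omega> = (if w \<tau> + \<gamma> * Y (\<tau>-1) \<omega> + \<alpha> - eps \<tau> \<omega> > 0 then 1 else 0)"
      by (simp add: Ydef k)
    then show ?thesis using hA that by (auto simp: c_def)
  qed
  have Yt1: "Y (\<tau>+1) \<omega> = (if eps (\<tau>+1) \<omega> < (if eps \<tau> \<omega> < c then a1 else a0) then 1 else 0)" if "\<omega> \<in> A" for \<omega>
  proof -
    have "Y (\<tau>+1) \<omega> = (if w (\<tau>+1) + \<gamma> * Y \<tau> \<omega> + \<alpha> - eps (\<tau>+1) \<omega> > 0 then 1 else 0)"
      by (simp add: Ydef)
    then show ?thesis using Yt[OF that] by (auto simp: a1_def a0_def)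
  qed
  have Asp: "A \<subseteq> space M" using Aev sets.sets_into_space by auto
  have s1: "{\<omega> \<in> space M. Y \<tau> \<omega> = 1 \<and> Q \<omega>} = A \<inter> E {..<c} \<inter> E' {a1..} \<inter> B"
    using hQ Yt Yt1 Asp by (auto simp: E_def E'_def split: if_splits)
  have s2: "{\<omega> \<in> space M. w (\<tau>+1) + \<gamma> + \<alpha> \<le> eps (\<tau>+1) \<omega> \<and> eps (\<tau>+1) \<omega> < w (\<tau>+1) + \<alpha> \<and> Q \<omega>}
     = A \<inter> E {..<c} \<inter> E' {a1..<a0} \<inter> B"
    using hQ Yt Yt1 Asp a10 by (auto simp: E_def E'_def a1_def a0_def split: if_splits)
  have s3: "{\<omega> \<in> space M. eps (\<tau>+1) \<omega> \<ge> w (\<tau>+1) + \<alpha> \<and> Q \<omega>} = A \<inter> E UNIV \<inter> E' {a0..} \<inter> B"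
    using hQ Yt Yt1 Asp a10 by (auto simp: E_def E'_def a1_def a0_def split: if_splits)
  have EU: "E UNIV = space M" by (auto simp: E_def)
  have AI: "A \<inter> space M = A" using Asp by auto
  have un: "E' {a1..} = E' {a1..<a0} \<union> E' {a0..}" using a10 by (auto simp: E'_def)
  have Fc: "Fc = prob (E {..<c})" using hF by (simp add: E_def c_def vimage_def Collect_conj_eq Int_commute)
  have pr: "prob (E' {a1..}) = prob (E' {a1..<a0}) + prob (E' {a0..})"
    unfolding un by (rule finite_measure_Union) (auto simp: E'_def intro!: E'ev[unfolded E'_def, simplified])
  have "cond_prob M (\<lambda>\<omega>. Y \<tau> \<omega> = 1) Q = prob (A \<inter> E {..<c} \<inter> E' {a1..} \<inter> B) / prob {\<omega> \<in> space M. Q \<omega>}"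
    by (simp add: cond_prob_def s1)
  moreover have "cond_prob M (\<lambda>\<omega>. w (\<tau>+1) + \<gamma> + \<alpha> \<le> eps (\<tau>+1) \<omega> \<and> eps (\<tau>+1) \<omega> < w (\<tau>+1) + \<alpha>) Q = prob (A \<inter> E {..<c} \<inter> E' {a1..<a0} \<inter> B) / prob {\<omega> \<in> space M. Q \<omega>}"
    unfolding cond_prob_def using s2 by (simp add: conj_assoc)
  moreover have "cond_prob M (\<lambda>\<omega>. eps (\<tau>+1) \<omega> \<ge> w (\<tau>+1) + \<alpha>) Q = prob (A \<inter> E UNIV \<inter> E' {a0..} \<inter> B) / prob {\<omega> \<in> space M. Q \<omega>}"
    unfolding cond_prob_def s3 by simp
  moreover have "prob (A \<inter> E {..<c} \<inter> E' {a1..} \<inter> B) = prob (A \<inter> E {..<c} \<inter> E' {a1..<a0} \<inter> B) + Fc * prob (A \<inter> E UNIV \<inter> E' {a0..} \<inter> B)"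
    using cr[of "{..<c}" "{a1..}"] cr[of "{..<c}" "{a1..<a0}"] cr[of "UNIV" "{a0..}"] pr
    by (simp add: Fc EU AI prob_space algebra_simps)
  ultimately show ?thesis by (simp add: add_divide_distrib)
qed

end

theorem lemma1:
  fixes M :: "'a measure"
    and T s t :: nat
    and w :: "nat \<Rightarrow> real" and \<gamma> \<alpha> :: real
    and y0 :: "'a \<Rightarrow> real" and eps :: "nat \<Rightarrow> 'a \<Rightarrow> real"
    and F :: "real \<Rightarrow> real" and d :: real
  assumes "prob_space M"
    and "\<gamma> < 0"
    and "s \<in> {1..T}" and "t \<in> {1..T}" and "t \<ge> s + 2" and "t + 1 \<le> T"
    and "d \<in> {0, 1}"
    and y0_bin: "\<forall>\<omega>\<in>space M. y0 \<omega> \<in> {0, 1}"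
    and indep: "prob_space.indep_vars M (\<lambda>_. borel) (\<lambda>i. if i = 0 then y0 else eps i) {0..T}"
    and cdf: "\<forall>k\<in>{1..T}. \<forall>x. F x = measure M {\<omega> \<in> space M. eps k \<omega> \<le> x}"
    and abs_cont: "\<forall>k\<in>{1..T}. absolutely_continuous lborel (distr M borel (eps k))"
    and supp: "\<forall>a b. a < b \<longrightarrow> F a < F b"
  shows "\<forall>\<tau>\<in>{s, t}.
     (\<P>(\<omega> in M. yseq w \<gamma> \<alpha> (y0 \<omega>) (\<lambda>i. eps i \<omega>) \<tau> = 1 \<bar>
          yseq w \<gamma> \<alpha> (y0 \<omega>) (\<lambda>i. eps i \<omega>) (s - 1) = d \<and>
          yseq w \<gamma> \<alpha> (y0 \<omega>) (\<lambda>i. eps i \<omega>) (t - 1) = d \<and>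
          yseq w \<gamma> \<alpha> (y0 \<omega>) (\<lambda>i. eps i \<omega>) (s + 1) = 1 \<and>
          yseq w \<gamma> \<alpha> (y0 \<omega>) (\<lambda>i. eps i \<omega>) (t + 1) = 1)
      = F (w \<tau> + \<gamma> * d + \<alpha>) *
        \<P>(\<omega> in M. eps (\<tau> + 1) \<omega> < w (\<tau> + 1) + \<gamma> + \<alpha> \<bar>
          yseq w \<gamma> \<alpha> (y0 \<omega>) (\<lambda>i. eps i \<omega>) (s - 1) = d \<and>
          yseq w \<gamma> \<alpha> (y0 \<omega>) (\<lambda>i. eps i \<omega>) (t - 1) = d \<and>
          yseq w \<gamma> \<alpha> (y0 \<omega>) (\<lambda>i. eps i \<omega>) (s + 1) = 1 \<and>
          yseq w \<gamma> \<alpha> (y0 \<omega>) (\<lambda>i. eps i \<omega>) (t + 1) = 1))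
   \<and>
     (\<P>(\<omega> in M. yseq w \<gamma> \<alpha> (y0 \<omega>) (\<lambda>i. eps i \<omega>) \<tau> = 1 \<bar>
          yseq w \<gamma> \<alpha> (y0 \<omega>) (\<lambda>i. eps i \<omega>) (s - 1) = d \<and>
          yseq w \<gamma> \<alpha> (y0 \<omega>) (\<lambda>i. eps i \<omega>) (t - 1) = d \<and>
          yseq w \<gamma> \<alpha> (y0 \<omega>) (\<lambda>i. eps i \<omega>) (s + 1) = 0 \<and>
          yseq w \<gamma> \<alpha> (y0 \<omega>) (\<lambda>i. eps i \<omega>) (t + 1) = 0)
      = \<P>(\<omega> in M. w (\<tau> + 1) + \<gamma> + \<alpha> \<le> eps (\<tau> + 1) \<omega> \<and> eps (\<tau> + 1) \<omega> < w (\<tau> + 1) + \<alpha> \<bar>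
          yseq w \<gamma> \<alpha> (y0 \<omega>) (\<lambda>i. eps i \<omega>) (s - 1) = d \<and>
          yseq w \<gamma> \<alpha> (y0 \<omega>) (\<lambda>i. eps i \<omega>) (t - 1) = d \<and>
          yseq w \<gamma> \<alpha> (y0 \<omega>) (\<lambda>i. eps i \<omega>) (s + 1) = 0 \<and>
          yseq w \<gamma> \<alpha> (y0 \<omega>) (\<lambda>i. eps i \<omega>) (t + 1) = 0)
        + F (w \<tau> + \<gamma> * d + \<alpha>) *
        \<P>(\<omega> in M. eps (\<tau> + 1) \<omega> \<ge> w (\<tau> + 1) + \<alpha> \<bar>
          yseq w \<gamma> \<alpha> (y0 \<omega>) (\<lambda>i. eps i \<omega>) (s - 1) = d \<and>
          yseq w \<gamma> \<alpha> (y0 \<omega>) (\<lambda>i. eps i \<omega>) (t - 1) = d \<and>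
          yseq w \<gamma> \<alpha> (y0 \<omega>) (\<lambda>i. eps i \<omega>) (s + 1) = 0 \<and>
          yseq w \<gamma> \<alpha> (y0 \<omega>) (\<lambda>i. eps i \<omega>) (t + 1) = 0))"
proof -
  interpret prob_space M by (rule assms(1))
  let ?X = "\<lambda>i. if i = 0 then y0 else eps i"
  define Y where "Y = (\<lambda>n \<omega>. yseq w \<gamma> \<alpha> (y0 \<omega>) (\<lambda>i. eps i \<omega>) n)"
  have Ydef: "\<And>n \<omega>. Y n \<omega> = yseq w \<gamma> \<alpha> (y0 \<omega>) (\<lambda>i. eps i \<omega>) n" by (simp add: Y_def)
  define G where "G K = sigma (space M) (\<Union>i\<in>K. {?X i -` S \<inter> space M | S. S \<in> sets (borel::real measure)})" for K
  have Xg: "?X i \<in> borel_measurable (G K)" if "i \<in> K" for i K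
    unfolding G_def by (rule grp_meas[OF that])
  have y0g: "y0 \<in> borel_measurable (G K)" if "0 \<in> K" for K using Xg[OF that] by simp
  have epsg: "eps i \<in> borel_measurable (G K)" if "i \<in> K" "i \<noteq> 0" for i K using Xg[OF that(1)] that(2) by simp
  have Ymeas: "(\<lambda>\<omega>. Y n \<omega>) \<in> borel_measurable (G {0..m})" if "n \<le> m" for n m
    unfolding Y_def using that by (auto intro!: yseq_meas y0g epsg)
  have Yfm: "(\<lambda>\<omega>. yfrom w \<gamma> \<alpha> v (\<lambda>i. eps i \<omega>) m k) \<in> borel_measurable (G {m+1..T})" if "m + k \<le> T" for v m k
    using that by (auto intro!: yfrom_meas epsg)
  have Gpred: "{\<omega> \<in> space M. P \<omega>} \<in> sigma_sets (space M) (\<Union>i\<in>K. {?X i -` S \<inter> space M | S. S \<in> sets (borel::real measure)})"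
    if "Measurable.pred (G K) P" for K P
    using that unfolding G_def by (rule grp_pred)
  have hF: "F x = prob {\<omega> \<in> space M. eps k \<omega> < x}" if "k \<in> {1..T}" for k x
  proof -
    have "\<forall>i\<in>{0..T}. ?X i \<in> borel_measurable M" using indep unfolding indep_vars_def2 by auto
    moreover have k0: "k \<in> {0..T}" "k \<noteq> 0" using that by auto
    ultimately have em: "eps k \<in> borel_measurable M" by (metis (no_types, lifting))
    have "{x} \<in> null_sets (distr M borel (eps k))"
      using abs_cont that countable_imp_null_set_lborel[of "{x}"] unfolding absolutely_continuous_def by auto
    then have "emeasure M (eps k -` {x} \<inter> space M) = 0"
      using em by (simp add: emeasure_distr null_sets_def)
    then have z: "prob {\<omega> \<in> space M. eps k \<omega> = x} = 0"
      by (simp add: measure_def vimage_def Collect_conj_eq Int_commute)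
    have "{\<omega> \<in> space M. eps k \<omega> \<le> x} = {\<omega> \<in> space M. eps k \<omega> < x} \<union> {\<omega> \<in> space M. eps k \<omega> = x}" by auto
    then have "prob {\<omega> \<in> space M. eps k \<omega> \<le> x} = prob {\<omega> \<in> space M. eps k \<omega> < x} + prob {\<omega> \<in> space M. eps k \<omega> = x}"
    proof -
      note em[measurable]
      have e1: "{\<omega> \<in> space M. eps k \<omega> < x} \<in> sets M" "{\<omega> \<in> space M. eps k \<omega> = x} \<in> sets M" by measurable
      show ?thesis by (subst finite_measure_Union[OF e1, symmetric]) (auto intro!: arg_cong[where f=prob])
    qed
    then show ?thesis using z cdf that by simp
  qed
  have s1: "1 \<le> s" "s + 1 \<le> T" and t1: "1 \<le> t" "t + 1 \<le> T" using assms by auto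
  have eqt1: "t - 1 = (s + 1) + (t - s - 2)" and eqt2: "t + 1 = (s + 1) + (t - s)" using assms by auto
  have Ysh1: "Y (t-1) \<omega> = yfrom w \<gamma> \<alpha> (Y (s+1) \<omega>) (\<lambda>i. eps i \<omega>) (s+1) (t - s - 2)" for \<omega>
    unfolding Y_def by (subst eqt1) (rule yseq_yfrom)
  have Ysh2: "Y (t+1) \<omega> = yfrom w \<gamma> \<alpha> (Y (s+1) \<omega>) (\<lambda>i. eps i \<omega>) (s+1) (t - s)" for \<omega>
    unfolding Y_def by (subst eqt2) (rule yseq_yfrom)
  have As: "{\<omega> \<in> space M. Y (s-1) \<omega> = d} \<in> sigma_sets (space M) (\<Union>i\<in>{0..s-1}. {?X i -` S \<inter> space M | S. S \<in> sets (borel::real measure)})"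
  proof (rule Gpred)
    show "Measurable.pred (G {0..s-1}) (\<lambda>\<omega>. Y (s-1) \<omega> = d)"
      by (rule pred_eq_const1[OF Ymeas[of "s-1" "s-1"]]) auto
  qed
  have Bs: "{\<omega> \<in> space M. yfrom w \<gamma> \<alpha> v (\<lambda>i. eps i \<omega>) (s+1) (t - s - 2) = d \<and> yfrom w \<gamma> \<alpha> v (\<lambda>i. eps i \<omega>) (s+1) (t - s) = v}
     \<in> sigma_sets (space M) (\<Union>i\<in>{s+2..T}. {?X i -` S \<inter> space M | S. S \<in> sets (borel::real measure)})" for v
  proof (rule Gpred)
    have e: "s + 2 = s + 1 + 1" by simp
    show "Measurable.pred (G {s+2..T}) (\<lambda>\<omega>. yfrom w \<gamma> \<alpha> v (\<lambda>i. eps i \<omega>) (s+1) (t - s - 2) = d \<and> yfrom w \<gamma> \<alpha> v (\<lambda>i. eps i \<omega>) (s+1) (t - s) = v)"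
      unfolding e by (intro pred_intros_logic(3) pred_eq_const1[where N=borel] Yfm) (use assms in auto)
  qed
  have P1s: "cond_prob M (\<lambda>\<omega>. Y s \<omega> = 1) (\<lambda>\<omega>. Y (s-1) \<omega> = d \<and> Y (t-1) \<omega> = d \<and> Y (s+1) \<omega> = 1 \<and> Y (t+1) \<omega> = 1)
     = F (w s + \<gamma> * d + \<alpha>) * cond_prob M (\<lambda>\<omega>. eps (s+1) \<omega> < w (s+1) + \<gamma> + \<alpha>) (\<lambda>\<omega>. Y (s-1) \<omega> = d \<and> Y (t-1) \<omega> = d \<and> Y (s+1) \<omega> = 1 \<and> Y (t+1) \<omega> = 1)"
  proof (rule main1[OF indep assms(2) s1 Ydef As Bs])
    show "\<forall>\<omega>\<in>{\<omega> \<in> space M. Y (s - 1) \<omega> = d}. Y (s - 1) \<omega> = d" by auto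
    show "\<forall>\<omega>\<in>space M. (Y (s-1) \<omega> = d \<and> Y (t-1) \<omega> = d \<and> Y (s+1) \<omega> = 1 \<and> Y (t+1) \<omega> = 1) =
       (\<omega> \<in> {\<omega> \<in> space M. Y (s - 1) \<omega> = d} \<and> Y (s + 1) \<omega> = 1 \<and> \<omega> \<in> {\<omega> \<in> space M. yfrom w \<gamma> \<alpha> 1 (\<lambda>i. eps i \<omega>) (s+1) (t - s - 2) = d \<and> yfrom w \<gamma> \<alpha> 1 (\<lambda>i. eps i \<omega>) (s+1) (t - s) = 1})"
      using Ysh1 Ysh2 by auto
    show "F (w s + \<gamma> * d + \<alpha>) = prob {\<omega> \<in> space M. eps s \<omega> < w s + \<gamma> * d + \<alpha>}" using hF assms by auto
  qed
  have P0s: "cond_prob M (\<lambda>\<omega>. Y s \<omega> = 1) (\<lambda>\<omega>. Y (s-1) \<omega> = d \<and> Y (t-1) \<omega> = d \<and> Y (s+1) \<omega> = 0 \<and> Y (t+1) \<omega> = 0)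
     = cond_prob M (\<lambda>\<omega>. w (s+1) + \<gamma> + \<alpha> \<le> eps (s+1) \<omega> \<and> eps (s+1) \<omega> < w (s+1) + \<alpha>) (\<lambda>\<omega>. Y (s-1) \<omega> = d \<and> Y (t-1) \<omega> = d \<and> Y (s+1) \<omega> = 0 \<and> Y (t+1) \<omega> = 0)
      + F (w s + \<gamma> * d + \<alpha>) * cond_prob M (\<lambda>\<omega>. eps (s+1) \<omega> \<ge> w (s+1) + \<alpha>) (\<lambda>\<omega>. Y (s-1) \<omega> = d \<and> Y (t-1) \<omega> = d \<and> Y (s+1) \<omega> = 0 \<and> Y (t+1) \<omega> = 0)"
  proof (rule main0[OF indep assms(2) s1 Ydef As Bs])
    show "\<forall>\<omega>\<in>{\<omega> \<in> space M. Y (s - 1) \<omega> = d}. Y (s - 1) \<omega> = d" by auto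
    show "\<forall>\<omega>\<in>space M. (Y (s-1) \<omega> = d \<and> Y (t-1) \<omega> = d \<and> Y (s+1) \<omega> = 0 \<and> Y (t+1) \<omega> = 0) =
       (\<omega> \<in> {\<omega> \<in> space M. Y (s - 1) \<omega> = d} \<and> Y (s + 1) \<omega> = 0 \<and> \<omega> \<in> {\<omega> \<in> space M. yfrom w \<gamma> \<alpha> 0 (\<lambda>i. eps i \<omega>) (s+1) (t - s - 2) = d \<and> yfrom w \<gamma> \<alpha> 0 (\<lambda>i. eps i \<omega>) (s+1) (t - s) = 0})"
      using Ysh1 Ysh2 by auto
    show "F (w s + \<gamma> * d + \<alpha>) = prob {\<omega> \<in> space M. eps s \<omega> < w s + \<gamma> * d + \<alpha>}" using hF assms by auto
  qed
  have At: "{\<omega> \<in> space M. Y (s-1) \<omega> = d \<and> Y (t-1) \<omega> = d \<and> Y (s+1) \<omega> = v} \<in> sigma_sets (space M) (\<Union>i\<in>{0..t-1}. {?X i -` S \<inter> space M | S. S \<in> sets (borel::real measure)})" for v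
  proof (rule Gpred)
    have "s - 1 \<le> t - 1" "t - 1 \<le> t - 1" "s + 1 \<le> t - 1" using assms by auto
    then show "Measurable.pred (G {0..t-1}) (\<lambda>\<omega>. Y (s-1) \<omega> = d \<and> Y (t-1) \<omega> = d \<and> Y (s+1) \<omega> = v)"
      by (intro pred_intros_logic(3) pred_eq_const1[where N=borel] Ymeas) auto
  qed
  have Bt: "space M \<in> sigma_sets (space M) (\<Union>i\<in>{t+2..T}. {?X i -` S \<inter> space M | S. S \<in> sets (borel::real measure)})"
    by (rule sigma_sets_top)
  have P1t: "cond_prob M (\<lambda>\<omega>. Y t \<omega> = 1) (\<lambda>\<omega>. Y (s-1) \<omega> = d \<and> Y (t-1) \<omega> = d \<and> Y (s+1) \<omega> = 1 \<and> Y (t+1) \<omega> = 1)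
     = F (w t + \<gamma> * d + \<alpha>) * cond_prob M (\<lambda>\<omega>. eps (t+1) \<omega> < w (t+1) + \<gamma> + \<alpha>) (\<lambda>\<omega>. Y (s-1) \<omega> = d \<and> Y (t-1) \<omega> = d \<and> Y (s+1) \<omega> = 1 \<and> Y (t+1) \<omega> = 1)"
  proof (rule main1[OF indep assms(2) t1 Ydef At Bt])
    show "\<forall>\<omega>\<in>{\<omega> \<in> space M. Y (s-1) \<omega> = d \<and> Y (t-1) \<omega> = d \<and> Y (s+1) \<omega> = 1}. Y (t - 1) \<omega> = d" by auto
    show "\<forall>\<omega>\<in>space M. (Y (s-1) \<omega> = d \<and> Y (t-1) \<omega> = d \<and> Y (s+1) \<omega> = 1 \<and> Y (t+1) \<omega> = 1) =
       (\<omega> \<in> {\<omega> \<in> space M. Y (s-1) \<omega> = d \<and> Y (t-1) \<omega> = d \<and> Y (s+1) \<omega> = 1} \<and> Y (t + 1) \<omega> = 1 \<and> \<omega> \<in> space M)"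
      by auto
    show "F (w t + \<gamma> * d + \<alpha>) = prob {\<omega> \<in> space M. eps t \<omega> < w t + \<gamma> * d + \<alpha>}" using hF assms by auto
  qed
  have P0t: "cond_prob M (\<lambda>\<omega>. Y t \<omega> = 1) (\<lambda>\<omega>. Y (s-1) \<omega> = d \<and> Y (t-1) \<omega> = d \<and> Y (s+1) \<omega> = 0 \<and> Y (t+1) \<omega> = 0)
     = cond_prob M (\<lambda>\<omega>. w (t+1) + \<gamma> + \<alpha> \<le> eps (t+1) \<omega> \<and> eps (t+1) \<omega> < w (t+1) + \<alpha>) (\<lambda>\<omega>. Y (s-1) \<omega> = d \<and> Y (t-1) \<omega> = d \<and> Y (s+1) \<omega> = 0 \<and> Y (t+1) \<omega> = 0)
      + F (w t + \<gamma> * d + \<alpha>) * cond_prob M (\<lambda>\<omega>. eps (t+1) \<omega> \<ge> w (t+1) + \<alpha>) (\<lambda>\<omega>. Y (s-1) \<omega> = d \<and> Y (t-1) \<omega> = d \<and> Y (s+1) \<omega> = 0 \<and> Y (t+1) \<omega> = 0)"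
  proof (rule main0[OF indep assms(2) t1 Ydef At Bt])
    show "\<forall>\<omega>\<in>{\<omega> \<in> space M. Y (s-1) \<omega> = d \<and> Y (t-1) \<omega> = d \<and> Y (s+1) \<omega> = 0}. Y (t - 1) \<omega> = d" by auto
    show "\<forall>\<omega>\<in>space M. (Y (s-1) \<omega> = d \<and> Y (t-1) \<omega> = d \<and> Y (s+1) \<omega> = 0 \<and> Y (t+1) \<omega> = 0) =
       (\<omega> \<in> {\<omega> \<in> space M. Y (s-1) \<omega> = d \<and> Y (t-1) \<omega> = d \<and> Y (s+1) \<omega> = 0} \<and> Y (t + 1) \<omega> = 0 \<and> \<omega> \<in> space M)"
      by auto
    show "F (w t + \<gamma> * d + \<alpha>) = prob {\<omega> \<in> space M. eps t \<omega> < w t + \<gamma> * d + \<alpha>}" using hF assms by auto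
  qed
  show ?thesis using P1s P0s P1t P0t unfolding Y_def by auto
qed

end
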